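(* Every tree converges to the empty graph under the operator $KB_e$; that is, for every tree $T$ there is $m$ such that $KB_e^k(T)$ is the empty graph for all $k\ge m$.
   Context: All graphs are finite, simple and undirected. A biclique of a graph $G$ is a maximal (with respect to inclusion) induced subgraph of $G$ that is a complete bipartite graph $K_{p,q}$ with $p,q\ge 1$. The edge-biclique graph $KB_e(G)$ is the graph with one vertex for each biclique of $G$, in which two distinct vertices are adjacent if and only if the corresponding bicliques have at least one edge in common; if $G$ has no bicliques (e.g. $G$ has no edges), $KB_e(G)$ is the empty graph (no vertices). Iterates: $KB_e^0(G)=G$, $KB_e^k(G)=KB_e(KB_e^{k-1}(G))$. *)

theory Defs
  imports Main
begin

text \<open>A finite simple graph: a vertex set together with a set of 2-element edges.\<close>
type_synonym 'a graph = "'a set \<times> 'a set set"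

definition verts :: "'a graph \<Rightarrow> 'a set" where "verts G = fst G"
definition edges :: "'a graph \<Rightarrow> 'a set set" where "edges G = snd G"

definition adj :: "'a graph \<Rightarrow> 'a \<Rightarrow> 'a \<Rightarrow> bool" where
  "adj G u v \<longleftrightarrow> {u, v} \<in> edges G"

definition wf_graph :: "'a graph \<Rightarrow> bool" where
  "wf_graph G \<longleftrightarrow> finite (verts G) \<and>
     (\<forall>e\<in>edges G. \<exists>u v. u \<noteq> v \<and> e = {u, v} \<and> u \<in> verts G \<and> v \<in> verts G)"

definition connected_graph :: "'a graph \<Rightarrow> bool" where
  "connected_graph G \<longleftrightarrow>
     (\<forall>u\<in>verts G. \<forall>v\<in>verts G. (u, v) \<in> {(x, y). adj G x y}\<^sup>*)"

definition is_cycle :: "'a graph \<Rightarrow> 'a list \<Rightarrow> bool" where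
  "is_cycle G cs \<longleftrightarrow> length cs \<ge> 3 \<and> distinct cs \<and> set cs \<subseteq> verts G \<and>
     (\<forall>i. Suc i < length cs \<longrightarrow> adj G (cs ! i) (cs ! Suc i)) \<and>
     adj G (last cs) (hd cs)"

definition acyclic_graph :: "'a graph \<Rightarrow> bool" where
  "acyclic_graph G \<longleftrightarrow> (\<nexists>cs. is_cycle G cs)"

definition is_tree :: "'a graph \<Rightarrow> bool" where
  "is_tree G \<longleftrightarrow> wf_graph G \<and> verts G \<noteq> {} \<and> connected_graph G \<and> acyclic_graph G"

definition induces_complete_bipartite :: "'a graph \<Rightarrow> 'a set \<Rightarrow> bool" where
  "induces_complete_bipartite G S \<longleftrightarrow> S \<subseteq> verts G \<and>
     (\<exists>A B. A \<noteq> {} \<and> B \<noteq> {} \<and> A \<inter> B = {} \<and> A \<union> B = S \<and>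
        (\<forall>a\<in>A. \<forall>b\<in>B. adj G a b) \<and>
        (\<forall>a\<in>A. \<forall>a'\<in>A. \<not> adj G a a') \<and>
        (\<forall>b\<in>B. \<forall>b'\<in>B. \<not> adj G b b'))"

definition is_biclique :: "'a graph \<Rightarrow> 'a set \<Rightarrow> bool" where
  "is_biclique G S \<longleftrightarrow> induces_complete_bipartite G S \<and>
     (\<forall>S'. S \<subset> S' \<longrightarrow> \<not> induces_complete_bipartite G S')"

definition share_edge :: "'a graph \<Rightarrow> 'a set \<Rightarrow> 'a set \<Rightarrow> bool" where
  "share_edge G S S' \<longleftrightarrow> (\<exists>e\<in>edges G. e \<subseteq> S \<and> e \<subseteq> S')"

definition KBe_raw :: "'a graph \<Rightarrow> 'a set graph" where
  "KBe_raw G = ({S. is_biclique G S},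
     {{S, S'} | S S'. S \<noteq> S' \<and> is_biclique G S \<and> is_biclique G S' \<and> share_edge G S S'})"

text \<open>To iterate we relabel vertices (finite sets of naturals) injectively by
  naturals via the binary encoding; this is a graph isomorphism.\<close>
definition enc :: "nat set \<Rightarrow> nat" where
  "enc S = (\<Sum>i\<in>S. 2 ^ i)"

definition map_graph :: "('a \<Rightarrow> 'b) \<Rightarrow> 'a graph \<Rightarrow> 'b graph" where
  "map_graph f G = (f ` verts G, (\<lambda>e. f ` e) ` edges G)"

definition KBe :: "nat graph \<Rightarrow> nat graph" where
  "KBe G = map_graph enc (KBe_raw G)"

definition empty_graph :: "'a graph \<Rightarrow> bool" where
  "empty_graph G \<longleftrightarrow> verts G = {}"

end

theory Submission
  imports Defs "HOL-Library.Nat_Bijection"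
begin

lemma adj_sym: "adj G u v = adj G v u"
  by (simp add: adj_def insert_commute)

lemma adj_irrefl: "wf_graph G \<Longrightarrow> \<not> adj G u u"
  unfolding wf_graph_def adj_def by (metis doubleton_eq_iff insert_absorb2)

lemma adj_verts: "wf_graph G \<Longrightarrow> adj G u v \<Longrightarrow> u \<in> verts G \<and> v \<in> verts G"
  unfolding wf_graph_def adj_def by (metis doubleton_eq_iff)

lemma no_triangle:
  assumes wf: "wf_graph G" and ac: "acyclic_graph G"
    and ab: "adj G a b" and bc: "adj G b c" and ca: "adj G c a"
  shows False
proof -
  have ne: "a \<noteq> b" "b \<noteq> c" "a \<noteq> c"
    using adj_irrefl[OF wf] ab bc ca adj_sym by metis+
  have "is_cycle G [a,b,c]"
    unfolding is_cycle_def
  proof (intro conjI allI impI)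
    fix i assume "Suc i < length [a,b,c]"
    then have "i = 0 \<or> i = 1" by auto
    then show "adj G ([a,b,c] ! i) ([a,b,c] ! Suc i)" using ab bc by auto
  qed (use ne ab bc ca adj_verts[OF wf] in auto)
  then show False using ac unfolding acyclic_graph_def by blast
qed

lemma no_square:
  assumes wf: "wf_graph G" and ac: "acyclic_graph G"
    and ne: "a \<noteq> a'" "b \<noteq> b'" "a \<noteq> b" "a \<noteq> b'" "a' \<noteq> b" "a' \<noteq> b'"
    and e: "adj G a b" "adj G b a'" "adj G a' b'" "adj G b' a"
  shows False
proof -
  have "is_cycle G [a,b,a',b']"
    unfolding is_cycle_def
  proof (intro conjI allI impI)
    fix i assume "Suc i < length [a,b,a',b']"
    then have "i = 0 \<or> i = 1 \<or> i = 2" by auto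
    then show "adj G ([a,b,a',b'] ! i) ([a,b,a',b'] ! Suc i)" using e by auto
  qed (use ne e adj_verts[OF wf] in auto)
  then show False using ac unfolding acyclic_graph_def by blast
qed

definition NB :: "'a graph \<Rightarrow> 'a \<Rightarrow> 'a set" where
  "NB G c = insert c {x. adj G c x}"

context
  fixes G :: "'a graph"
  assumes wf: "wf_graph G" and ac: "acyclic_graph G"
begin

lemma cbp_star:
  assumes "induces_complete_bipartite G S"
  shows "\<exists>c\<in>S. S \<subseteq> NB G c"
proof -
  obtain A B where AB: "A \<noteq> {}" "B \<noteq> {}" "A \<inter> B = {}" "A \<union> B = S"
    "\<forall>a\<in>A. \<forall>b\<in>B. adj G a b"
    using assms unfolding induces_complete_bipartite_def by blast
  obtain a b where ab: "a \<in> A" "b \<in> B" using AB by blast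
  show ?thesis
  proof (cases "\<exists>a'\<in>A. a' \<noteq> a")
    case True
    then obtain a' where a': "a' \<in> A" "a' \<noteq> a" by blast
    have "B = {b}"
    proof (rule ccontr)
      assume "B \<noteq> {b}"
      then obtain b' where b': "b' \<in> B" "b' \<noteq> b" using ab by blast
      have e1: "adj G a b" "adj G a' b'" "adj G a b'" "adj G a' b"
        using AB ab a' b' by blast+
      have e2: "adj G b a'" "adj G b' a" using e1 adj_sym[of G] by simp_all
      have d: "a \<noteq> b" "a \<noteq> b'" "a' \<noteq> b" "a' \<noteq> b'"
        using AB ab a' b' by blast+
      show False
        by (rule no_square[OF wf ac, of a a' b b']) (use e1 e2 d a' b' in simp_all)
    qed
    moreover have "\<forall>x\<in>A. adj G b x" using AB(5) ab adj_sym[of G b] by simp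
    ultimately have "S \<subseteq> NB G b" using AB unfolding NB_def by auto
    then show ?thesis using ab AB by blast
  next
    case False
    then have "A = {a}" using ab by blast
    then have "S \<subseteq> NB G a" using AB unfolding NB_def by auto
    then show ?thesis using ab AB by blast
  qed
qed

lemma star_cbp:
  assumes "adj G c x"
  shows "induces_complete_bipartite G (NB G c)"
proof -
  have V: "NB G c \<subseteq> verts G" unfolding NB_def using adj_verts[OF wf] assms by auto
  have B: "\<forall>b\<in>{x. adj G c x}. \<forall>b'\<in>{x. adj G c x}. \<not> adj G b b'"
  proof (intro ballI)
    fix b b' assume "b \<in> {x. adj G c x}" "b' \<in> {x. adj G c x}"
    then have "adj G c b" "adj G b' c" using adj_sym[of G b' c] by simp_all
    then show "\<not> adj G b b'" using no_triangle[OF wf ac, of c b b'] by blast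
  qed
  have o: "{c} \<noteq> {}" "{x. adj G c x} \<noteq> {}" "{c} \<inter> {x. adj G c x} = {}"
    "{c} \<union> {x. adj G c x} = NB G c" "\<forall>a\<in>{c}. \<forall>b\<in>{x. adj G c x}. adj G a b"
    "\<forall>a\<in>{c}. \<forall>a'\<in>{c}. \<not> adj G a a'"
    using assms adj_irrefl[OF wf] by (auto simp: NB_def)
  have "\<exists>A B. A \<noteq> {} \<and> B \<noteq> {} \<and> A \<inter> B = {} \<and> A \<union> B = NB G c \<and>
        (\<forall>a\<in>A. \<forall>b\<in>B. adj G a b) \<and>
        (\<forall>a\<in>A. \<forall>a'\<in>A. \<not> adj G a a') \<and>
        (\<forall>b\<in>B. \<forall>b'\<in>B. \<not> adj G b b')"
    by (rule exI[of _ "{c}"], rule exI[of _ "{x. adj G c x}"], intro conjI o B)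
  then show ?thesis unfolding induces_complete_bipartite_def using V by (rule conjI[rotated])
qed

lemma biclique_star:
  assumes "is_biclique G S"
  shows "\<exists>c. S = NB G c \<and> c \<in> verts G \<and> (\<exists>x. adj G c x)"
proof -
  have cb: "induces_complete_bipartite G S" using assms is_biclique_def by blast
  obtain c where c: "c \<in> S" "S \<subseteq> NB G c" using cbp_star[OF cb] by blast
  obtain A B where AB: "A \<noteq> {}" "B \<noteq> {}" "A \<inter> B = {}" "A \<union> B = S"
    using cb unfolding induces_complete_bipartite_def by blast
  have cV: "c \<in> verts G" using cb c unfolding induces_complete_bipartite_def by blast
  obtain y where y: "y \<in> S" "y \<noteq> c" using AB by blast
  then have cy: "adj G c y" using c unfolding NB_def by auto
  have "S = NB G c"
  proof (rule ccontr)
    assume "S \<noteq> NB G c"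
    then have "S \<subset> NB G c" using c by blast
    moreover have "induces_complete_bipartite G (NB G c)" by (rule star_cbp[OF cy])
    moreover have "\<forall>S'. S \<subset> S' \<longrightarrow> \<not> induces_complete_bipartite G S'"
      using assms unfolding is_biclique_def by blast
    ultimately show False by blast
  qed
  then show ?thesis using cV cy by blast
qed

definition centre :: "'a set \<Rightarrow> 'a" where
  "centre S = (SOME c. S = NB G c \<and> c \<in> verts G \<and> (\<exists>x. adj G c x))"

lemma centre:
  assumes "is_biclique G S"
  shows "S = NB G (centre S) \<and> centre S \<in> verts G \<and> (\<exists>x. adj G (centre S) x)"
  unfolding centre_def by (rule someI_ex[OF biclique_star[OF assms]])

lemma centre_inj: "inj_on centre {S. is_biclique G S}"
  by (rule inj_onI) (metis centre mem_Collect_eq)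

lemma share_adj:
  assumes "S \<noteq> S'" "S = NB G c" "S' = NB G c'" "share_edge G S S'"
  shows "adj G c c'"
proof -
  obtain e where e: "e \<in> edges G" "e \<subseteq> S" "e \<subseteq> S'"
    using assms unfolding share_edge_def by blast
  obtain x y where xy: "x \<noteq> y" "e = {x,y}" using e wf unfolding wf_graph_def by blast
  have axy: "adj G x y" using e xy adj_def by metis
  have "c \<in> {x,y}"
  proof (rule ccontr)
    assume "c \<notin> {x,y}"
    then have "adj G c x" "adj G c y" using e xy assms unfolding NB_def by auto
    then show False using no_triangle[OF wf ac] axy adj_sym by metis
  qed
  moreover have "c' \<in> {x,y}"
  proof (rule ccontr)
    assume "c' \<notin> {x,y}"
    then have "adj G c' x" "adj G c' y" using e xy assms unfolding NB_def by auto
    then show False using no_triangle[OF wf ac] axy adj_sym by metis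
  qed
  moreover have "c \<noteq> c'" using assms by blast
  ultimately have "(c = x \<and> c' = y) \<or> (c = y \<and> c' = x)" by blast
  then show ?thesis using axy adj_sym by metis
qed

lemma adjK:
  assumes "adj (KBe_raw G) S S'"
  shows "S \<noteq> S' \<and> is_biclique G S \<and> is_biclique G S' \<and> share_edge G S S'"
proof -
  obtain T T' where "{S,S'} = {T,T'}" "T \<noteq> T'" "is_biclique G T" "is_biclique G T'"
    "share_edge G T T'"
    using assms unfolding adj_def KBe_raw_def edges_def by auto
  then show ?thesis unfolding share_edge_def doubleton_eq_iff by blast
qed

lemma raw_acyclic: "acyclic_graph (KBe_raw G)"
  unfolding acyclic_graph_def
proof
  assume "\<exists>cs. is_cycle (KBe_raw G) cs"
  then obtain cs where cs: "is_cycle (KBe_raw G) cs" by blast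
  have sub: "set cs \<subseteq> {S. is_biclique G S}"
    using cs unfolding is_cycle_def KBe_raw_def verts_def by auto
  define ds where "ds = map centre cs"
  have ne: "cs \<noteq> []" using cs unfolding is_cycle_def by auto
  have aa: "adj G (centre S) (centre S')" if "adj (KBe_raw G) S S'" for S S'
    using adjK[OF that] centre share_adj by metis
  have "is_cycle G ds"
    unfolding is_cycle_def
  proof (intro conjI allI impI)
    show "3 \<le> length ds" using cs unfolding ds_def is_cycle_def by simp
    show "distinct ds" unfolding ds_def distinct_map
      using cs inj_on_subset[OF centre_inj sub] unfolding is_cycle_def by blast
    show "set ds \<subseteq> verts G" unfolding ds_def using sub centre by auto
    fix i assume "Suc i < length ds"
    then show "adj G (ds ! i) (ds ! Suc i)"
      using cs aa unfolding ds_def is_cycle_def by auto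
  next
    show "adj G (last ds) (hd ds)"
      using cs aa ne unfolding ds_def is_cycle_def by (simp add: last_map hd_map)
  qed
  then show False using ac unfolding acyclic_graph_def by blast
qed

lemma raw_wf: "wf_graph (KBe_raw G)"
proof -
  have "{S. is_biclique G S} \<subseteq> Pow (verts G)"
    unfolding is_biclique_def induces_complete_bipartite_def by auto
  then have "finite {S. is_biclique G S}"
    using wf unfolding wf_graph_def by (meson finite_Pow_iff finite_subset)
  then show ?thesis unfolding wf_graph_def KBe_raw_def verts_def edges_def by auto
qed

lemma bicl_finite: "is_biclique G S \<Longrightarrow> finite S"
  using wf unfolding is_biclique_def induces_complete_bipartite_def wf_graph_def
  by (meson finite_subset)

lemma leaf:
  assumes "edges G \<noteq> {}"
  shows "\<exists>l u. adj G l u \<and> (\<forall>x. adj G l x \<longrightarrow> x = u)"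
proof -
  define P where "P p \<longleftrightarrow> distinct p \<and> set p \<subseteq> verts G \<and>
      (\<forall>i. Suc i < length p \<longrightarrow> adj G (p!i) (p!Suc i)) \<and> length p \<ge> 2" for p
  obtain e where "e \<in> edges G" using assms by blast
  then obtain a b where ab: "a \<noteq> b" "adj G a b" using wf unfolding wf_graph_def adj_def by metis
  have "P [a,b]" unfolding P_def using ab adj_verts[OF wf] by (auto simp: less_Suc_eq)
  moreover have "\<forall>p. P p \<longrightarrow> length p < card (verts G) + 1"
  proof (intro allI impI)
    fix p assume "P p"
    then have "length p = card (set p)" "set p \<subseteq> verts G"
      unfolding P_def by (auto simp: distinct_card)
    then show "length p < card (verts G) + 1"
      using wf unfolding wf_graph_def by (metis card_mono less_Suc_eq_le Suc_eq_plus1)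
  qed
  ultimately obtain p where p: "P p" and pmax: "\<forall>q. P q \<longrightarrow> length q \<le> length p"
    using ex_has_greatest_nat[of P "[a,b]" length] by blast
  have pd: "distinct p" "set p \<subseteq> verts G" "\<And>i. Suc i < length p \<Longrightarrow> adj G (p!i) (p!Suc i)"
     "length p \<ge> 2" using p unfolding P_def by auto
  have lu: "adj G (p!0) (p!1)" using pd by auto
  have "\<forall>x. adj G (p!0) x \<longrightarrow> x = p!1"
  proof (intro allI impI)
    fix x assume x: "adj G (p!0) x"
    show "x = p!1"
    proof (rule ccontr)
      assume xn: "x \<noteq> p!1"
      show False
      proof (cases "x \<in> set p")
        case False
        have "P (x # p)" unfolding P_def
        proof (intro conjI allI impI)
          show "distinct (x # p)" using False pd by simp
          show "set (x # p) \<subseteq> verts G" using pd adj_verts[OF wf x] by simp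
          fix i assume i: "Suc i < length (x # p)"
          show "adj G ((x # p) ! i) ((x # p) ! Suc i)"
          proof (cases i)
            case 0 then show ?thesis using x adj_sym[of G x "p!0"] by simp
          next
            case (Suc j) then show ?thesis using i pd by simp
          qed
        qed (use pd in simp)
        then show False using pmax by fastforce
      next
        case True
        then obtain i where i: "i < length p" "x = p!i" by (metis in_set_conv_nth)
        have "i \<noteq> 0" using i x adj_irrefl[OF wf] by metis
        moreover have "i \<noteq> 1" using i xn by blast
        ultimately have i2: "i \<ge> 2" by arith
        define cs where "cs = take (Suc i) p"
        have len: "length cs = Suc i" using i unfolding cs_def by simp
        have "is_cycle G cs" unfolding is_cycle_def
        proof (intro conjI allI impI)
          show "3 \<le> length cs" using len i2 by simp
          show "distinct cs" unfolding cs_def using pd by simp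
          show "set cs \<subseteq> verts G" unfolding cs_def using pd set_take_subset by fastforce
          fix j assume j: "Suc j < length cs"
          then show "adj G (cs ! j) (cs ! Suc j)" unfolding cs_def using pd i len by simp
        next
          have "last cs = p!i" unfolding cs_def using i by (subst last_conv_nth) (auto simp: min_def intro: arg_cong[where f="(!) p"])
          moreover have "hd cs = p!0" unfolding cs_def using i by (cases p) auto
          ultimately show "adj G (last cs) (hd cs)" using x i adj_sym by metis
        qed
        then show False using ac unfolding acyclic_graph_def by blast
      qed
    qed
  qed
  then show ?thesis using lu by blast
qed

lemma card_less:
  assumes "verts G \<noteq> {}"
  shows "card {S. is_biclique G S} < card (verts G)"
proof -
  let ?B = "{S. is_biclique G S}"
  have fin: "finite (verts G)" using wf wf_graph_def by blast
  have sub: "centre ` ?B \<subseteq> verts G" using centre by auto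
  have "\<exists>w\<in>verts G. w \<notin> centre ` ?B"
  proof (cases "edges G = {}")
    case True
    then have "?B = {}" using centre adj_def by fastforce
    then show ?thesis using assms by auto
  next
    case False
    obtain l u where lu: "adj G l u" "\<forall>x. adj G l x \<longrightarrow> x = u" using leaf[OF False] by blast
    have "\<not> (l \<in> centre ` ?B \<and> u \<in> centre ` ?B)"
    proof
      assume "l \<in> centre ` ?B \<and> u \<in> centre ` ?B"
      then obtain S S' where S: "is_biclique G S" "l = centre S"
        and S': "is_biclique G S'" "u = centre S'" by blast
      have SN: "S = NB G l" "S' = NB G u" using S S' centre by auto
      have "{x. adj G l x} = {u}" using lu by blast
      then have "NB G l = {l, u}" unfolding NB_def by simp
      moreover have "adj G u l" using lu(1) adj_sym[of G u l] by simp
      ultimately have "S \<subseteq> S'" using SN unfolding NB_def by auto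
      moreover have "S \<noteq> S'"
      proof
        assume "S = S'"
        then have "l = u" using S S' by simp
        then show False using lu(1) adj_irrefl[OF wf] by simp
      qed
      ultimately show False using S S' unfolding is_biclique_def by blast
    qed
    then show ?thesis using lu adj_verts[OF wf] by blast
  qed
  then have "centre ` ?B \<subset> verts G" using sub by blast
  then have "card (centre ` ?B) < card (verts G)" using fin psubset_card_mono by blast
  then show ?thesis using card_image[OF centre_inj] by simp
qed

end

lemma map_wf:
  assumes "wf_graph H" "inj_on f (verts H)"
  shows "wf_graph (map_graph f H)"
  using assms unfolding wf_graph_def map_graph_def verts_def edges_def inj_on_def
  by fastforce

lemma map_adj:
  assumes wf: "wf_graph H" and inj: "inj_on f (verts H)"
    and xy: "x \<in> verts H" "y \<in> verts H" and a: "adj (map_graph f H) (f x) (f y)"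
  shows "adj H x y"
proof -
  obtain e where e: "e \<in> edges H" "{f x, f y} = f ` e"
    using a unfolding adj_def map_graph_def edges_def by auto
  obtain u v where uv: "e = {u,v}" "u \<in> verts H" "v \<in> verts H"
    using e wf unfolding wf_graph_def by blast
  have "{f x, f y} = {f u, f v}" using e uv by simp
  then have "(x = u \<and> y = v) \<or> (x = v \<and> y = u)"
    using inj xy uv unfolding doubleton_eq_iff inj_on_def by metis
  then show ?thesis using e uv adj_def by (metis insert_commute)
qed

lemma map_acyc:
  assumes wf: "wf_graph H" and inj: "inj_on f (verts H)" and ac: "acyclic_graph H"
  shows "acyclic_graph (map_graph f H)"
  unfolding acyclic_graph_def
proof
  assume "\<exists>cs. is_cycle (map_graph f H) cs"
  then obtain cs where cs: "is_cycle (map_graph f H) cs" by blast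
  define g where "g = the_inv_into (verts H) f"
  have cin: "\<And>c. c \<in> set cs \<Longrightarrow> g c \<in> verts H \<and> f (g c) = c"
  proof -
    fix c assume "c \<in> set cs"
    then have "c \<in> f ` verts H" using cs unfolding is_cycle_def map_graph_def verts_def by auto
    then show "g c \<in> verts H \<and> f (g c) = c" unfolding g_def
      using inj by (metis f_the_inv_into_f the_inv_into_into subset_refl)
  qed
  define ds where "ds = map g cs"
  have ne: "cs \<noteq> []" using cs unfolding is_cycle_def by auto
  have aa: "adj H (g c) (g c')" if "c \<in> set cs" "c' \<in> set cs" "adj (map_graph f H) c c'" for c c'
    using map_adj[OF wf inj, of "g c" "g c'"] cin that by metis
  have "is_cycle H ds"
    unfolding is_cycle_def
  proof (intro conjI allI impI)
    show "3 \<le> length ds" using cs unfolding ds_def is_cycle_def by simp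
    have "inj_on g (set cs)" by (rule inj_onI) (metis cin)
    then show "distinct ds" unfolding ds_def distinct_map
      using cs unfolding is_cycle_def by blast
    show "set ds \<subseteq> verts H" unfolding ds_def using cin by auto
    fix i assume i: "Suc i < length ds"
    then show "adj H (ds ! i) (ds ! Suc i)"
      using cs aa[of "cs!i" "cs!Suc i"] unfolding ds_def is_cycle_def by auto
  next
    show "adj H (last ds) (hd ds)"
      using cs aa[of "last cs" "hd cs"] ne unfolding ds_def is_cycle_def
      by (simp add: last_map hd_map)
  qed
  then show False using ac unfolding acyclic_graph_def by blast
qed

lemma enc_inj: "inj_on enc (Collect finite)"
proof -
  have "enc = set_encode" unfolding enc_def[abs_def] set_encode_def by simp
  then show ?thesis using inj_on_set_encode by simp
qed

lemma step:
  fixes G :: "nat graph"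
  assumes wf: "wf_graph G" and ac: "acyclic_graph G"
  shows "wf_graph (KBe G) \<and> acyclic_graph (KBe G) \<and>
    (verts G \<noteq> {} \<longrightarrow> card (verts (KBe G)) < card (verts G)) \<and>
    (verts G = {} \<longrightarrow> verts (KBe G) = {})"
proof -
  have vr: "verts (KBe_raw G) = {S. is_biclique G S}" unfolding KBe_raw_def verts_def by simp
  have inj: "inj_on enc (verts (KBe_raw G))"
    using inj_on_subset[OF enc_inj] bicl_finite[OF wf ac] vr by auto
  have vk: "verts (KBe G) = enc ` {S. is_biclique G S}"
    unfolding KBe_def map_graph_def verts_def using vr by (simp add: verts_def)
  have "wf_graph (KBe G)" unfolding KBe_def using map_wf[OF raw_wf[OF wf ac] inj] .
  moreover have "acyclic_graph (KBe G)" unfolding KBe_def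
    using map_acyc[OF raw_wf[OF wf ac] inj raw_acyclic[OF wf ac]] .
  moreover have "verts G \<noteq> {} \<longrightarrow> card (verts (KBe G)) < card (verts G)"
    using card_less[OF wf ac] vk card_image_le[of "{S. is_biclique G S}" enc]
      raw_wf[OF wf ac] vr unfolding wf_graph_def by fastforce
  moreover have "verts G = {} \<longrightarrow> verts (KBe G) = {}"
    using vk biclique_star[OF wf ac] by auto
  ultimately show ?thesis by blast
qed

lemma iter:
  "\<forall>G::nat graph. wf_graph G \<and> acyclic_graph G \<and> card (verts G) \<le> k \<longrightarrow>
     empty_graph ((KBe ^^ k) G)"
proof (induction k)
  case 0
  then show ?case unfolding empty_graph_def wf_graph_def by auto
next
  case (Suc k)
  show ?case
  proof (intro allI impI)
    fix G :: "nat graph" assume G: "wf_graph G \<and> acyclic_graph G \<and> card (verts G) \<le> Suc k"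
    have s: "wf_graph (KBe G)" "acyclic_graph (KBe G)" "card (verts (KBe G)) \<le> k"
      using step[of G] G by (auto intro: less_Suc_eq_le[THEN iffD1] dest: order.strict_trans2)
    then show "empty_graph ((KBe ^^ Suc k) G)"
      using Suc.IH[rule_format, of "KBe G"] by (simp add: funpow_Suc_right del: funpow.simps)
  qed
qed

theorem mainTheorem8:
  fixes T :: "nat graph"
  assumes "is_tree T"
  shows "\<exists>m. \<forall>k\<ge>m. empty_graph ((KBe ^^ k) T)"
proof (intro exI allI impI)
  fix k assume "card (verts T) \<le> k"
  then show "empty_graph ((KBe ^^ k) T)"
    using iter[of k] assms unfolding is_tree_def by blast
qed

end
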